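(* Let $\lambda\in\mathbb R$ and $\eta\ge 0$. Let $(P_n)_{n\ge0}$ be the monic polynomials determined by $P_{-1}=0$, $P_0=1$ and $$xP_n(x)=P_{n+1}(x)+\lambda n P_n(x)+n\bigl(1+\eta(n-1)\bigr)P_{n-1}(x),\qquad n\ge 0,$$ and let $\partial_{\lambda,\eta}$ be the lowering operator: the linear operator on polynomials with $\partial_{\lambda,\eta}P_n=nP_{n-1}$ (so $\partial_{\lambda,\eta}P_0=0$), extended by continuity to $\mathcal E^1_{\min}(\mathbb R)$. Let $\nu_{\lambda,\eta}$ be the probability measure on $\mathbb R$ defined in the context. Then for every $f\in\mathcal E^1_{\min}(\mathbb R)$ and every $x\in\mathbb R$, $$(\partial_{\lambda,\eta}f)(x)=\int_{\mathbb R}\frac{f(x+s)-f(x)}{s}\,\nu_{\lambda,\eta}(ds),$$ where, when $\nu_{\lambda,\eta}$ charges $s=0$ (namely in the case $\lambda=\eta=0$, where $\nu_{0,0}=\delta_0$), the integrand at $s=0$ is understood as the limit $f'(x)$, so that $\partial_{0,0}f=f'$.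
   Context: $\mathcal E^1_{\min}(\mathbb C)$ denotes the entire functions $f$ of first order and minimal type, i.e. for every $\varepsilon>0$ there is $C>0$ with $|f(z)|\le Ce^{\varepsilon|z|}$ for all $z\in\mathbb C$; $\mathcal E^1_{\min}(\mathbb R)$ is the set of restrictions of such functions to $\mathbb R$. It carries the (nuclear Fréchet) topology given by the norms $N_q(f)=\sum_{n\ge0}|f_n|^2(n!)^2 2^{nq}$, $q\in\mathbb N$, where $f(z)=\sum_n f_nz^n$; polynomials are dense, and $\partial_{\lambda,\eta}$ is continuous on polynomials for this topology, hence extends uniquely to a continuous operator on $\mathcal E^1_{\min}(\mathbb R)$. The measure $\nu_{\lambda,\eta}$ is the probability measure of orthogonality of the monic polynomials $(Q_n)_{n\ge0}$ with $Q_{-1}=0$, $Q_0=1$, $xQ_n(x)=Q_{n+1}(x)+\lambda(n+1)Q_n(x)+\eta n(n+1)Q_{n-1}(x)$; in particular $\nu_{\lambda,0}=\delta_\lambda$ (so for $\eta=0$, $\lambda\neq0$ the formula reads $(\partial_{\lambda,0}f)(x)=(f(x+\lambda)-f(x))/\lambda$). *)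

theory Defs
  imports "HOL-Probability.Probability" "HOL-Complex_Analysis.Complex_Analysis"
    "HOL-Computational_Algebra.Polynomial"
begin

fun Ppoly :: "real \<Rightarrow> real \<Rightarrow> nat \<Rightarrow> complex poly" where
  "Ppoly lam eta 0 = 1"
| "Ppoly lam eta (Suc 0) = [:0, 1:]"
| "Ppoly lam eta (Suc (Suc n)) =
     [:- complex_of_real (lam * real (Suc n)), 1:] * Ppoly lam eta (Suc n)
     - smult (complex_of_real (real (Suc n) * (1 + eta * real n))) (Ppoly lam eta n)"

fun Qpoly :: "real \<Rightarrow> real \<Rightarrow> nat \<Rightarrow> real poly" where
  "Qpoly lam eta 0 = 1"
| "Qpoly lam eta (Suc 0) = [:- lam, 1:]"
| "Qpoly lam eta (Suc (Suc n)) =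
     [:- (lam * real (Suc (Suc n))), 1:] * Qpoly lam eta (Suc n)
     - smult (eta * real (Suc n) * real (Suc (Suc n))) (Qpoly lam eta n)"

definition orth_measure :: "real \<Rightarrow> real \<Rightarrow> real measure \<Rightarrow> bool" where
  "orth_measure lam eta M \<longleftrightarrow>
     prob_space M \<and> sets M = sets borel \<and>
     (\<forall>n. integrable M (\<lambda>x. x ^ n)) \<and>
     (\<forall>m n. (\<integral>x. poly (Qpoly lam eta m) x * poly (Qpoly lam eta n) x \<partial>M) =
        (if m = n then (\<Prod>k\<in>{1..n}. eta * real k * real (k + 1)) else 0))"

text \<open>Entire functions of first order and minimal type (an element of E^1_min(R)
  is identified with the unique entire function it is the restriction of).\<close>
definition Emin :: "(complex \<Rightarrow> complex) set" where
  "Emin = {F. F holomorphic_on UNIV \<and>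
     (\<forall>\<epsilon>>0. \<exists>C. \<forall>z. norm (F z) \<le> C * exp (\<epsilon> * norm z))}"

definition Nnorm :: "nat \<Rightarrow> (complex \<Rightarrow> complex) \<Rightarrow> real" where
  "Nnorm q F = (\<Sum>n. (norm ((deriv ^^ n) F 0 / of_nat (fact n)))\<^sup>2
                       * (fact n)\<^sup>2 * 2 ^ (n * q))"

definition lowering_ext :: "real \<Rightarrow> real \<Rightarrow> ((complex \<Rightarrow> complex) \<Rightarrow> (complex \<Rightarrow> complex)) \<Rightarrow> bool" where
  "lowering_ext lam eta D \<longleftrightarrow>
     (\<forall>F\<in>Emin. D F \<in> Emin) \<and>
     (\<forall>F\<in>Emin. \<forall>G\<in>Emin. \<forall>a b. D (\<lambda>z. a * F z + b * G z) = (\<lambda>z. a * D F z + b * D G z)) \<and>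
     (\<forall>n. D (\<lambda>z. poly (Ppoly lam eta n) z) = (\<lambda>z. of_nat n * poly (Ppoly lam eta (n - 1)) z)) \<and>
     (\<forall>Fs F. (\<forall>k. Fs k \<in> Emin) \<longrightarrow> F \<in> Emin \<longrightarrow>
        (\<forall>q. (\<lambda>k. Nnorm q (\<lambda>z. Fs k z - F z)) \<longlonglongrightarrow> 0) \<longrightarrow>
        (\<forall>q. (\<lambda>k. Nnorm q (\<lambda>z. D (Fs k) z - D F z)) \<longlonglongrightarrow> 0))"

end

theory Submission
  imports Defs
begin


definition Econv :: "(nat \<Rightarrow> complex) \<Rightarrow> (nat \<Rightarrow> complex) \<Rightarrow> nat \<Rightarrow> complex" where
  "Econv a b m = (\<Sum>k\<le>m. of_nat (m choose k) * a (m - k) * b k)"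

lemma Econv_pascal:
  "Econv a b (Suc m) = (\<Sum>k\<le>m. of_nat (m choose k) * (a (Suc m - k) * b k + a (m - k) * b (Suc k)))"
proof -
  have X: "a (Suc m) * b 0 + (\<Sum>k\<le>m. of_nat (m choose Suc k) * a (m - k) * b (Suc k))
      = (\<Sum>k\<le>m. of_nat (m choose k) * a (Suc m - k) * b k)"
  proof -
    have "a (Suc m) * b 0 + (\<Sum>k\<le>m. of_nat (m choose Suc k) * a (m - k) * b (Suc k))
      = (\<Sum>k\<le>Suc m. of_nat (m choose k) * a (Suc m - k) * b k)"
      by (subst sum.atMost_Suc_shift) simp
    also have "\<dots> = (\<Sum>k\<le>m. of_nat (m choose k) * a (Suc m - k) * b k)"
      by simp
    finally show ?thesis .
  qed
  have "Econv a b (Suc m) = a (Suc m) * b 0 + (\<Sum>k\<le>m. of_nat (Suc m choose Suc k) * a (m - k) * b (Suc k))"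
    unfolding Econv_def by (subst sum.atMost_Suc_shift) simp
  also have "\<dots> = (a (Suc m) * b 0 + (\<Sum>k\<le>m. of_nat (m choose Suc k) * a (m - k) * b (Suc k)))
      + (\<Sum>k\<le>m. of_nat (m choose k) * a (m - k) * b (Suc k))"
    by (simp add: sum.distrib algebra_simps)
  also have "\<dots> = (\<Sum>k\<le>m. of_nat (m choose k) * a (Suc m - k) * b k)
      + (\<Sum>k\<le>m. of_nat (m choose k) * a (m - k) * b (Suc k))"
    unfolding X ..
  finally show ?thesis by (simp add: sum.distrib algebra_simps)
qed

lemma Econv_S2:
  fixes e :: complex
  shows "(\<Sum>k\<le>Suc n. of_nat (Suc n choose k) *
      (of_nat (Suc n - k) * (1 + e * of_nat (Suc n - k - 1)) * a (Suc n - k - 1) * b k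
       + e * of_nat k * of_nat (k - 1) * a (Suc n - k) * b (k - 1)))
    = of_nat (Suc n) * (1 + e * of_nat n) * Econv a b n"
proof -
  have 1: "(\<Sum>k\<le>Suc n. of_nat (Suc n choose k) *
      (of_nat (Suc n - k) * (1 + e * of_nat (Suc n - k - 1)) * a (Suc n - k - 1) * b k))
    = (\<Sum>k\<le>n. of_nat (Suc n) * of_nat (n choose k) * ((1 + e * of_nat (n - k)) * a (n - k) * b k))"
  proof -
    have "(\<Sum>k\<le>Suc n. of_nat (Suc n choose k) *
      (of_nat (Suc n - k) * (1 + e * of_nat (Suc n - k - 1)) * a (Suc n - k - 1) * b k))
      = (\<Sum>k\<le>n. of_nat (Suc n choose k) *
      (of_nat (Suc n - k) * (1 + e * of_nat (Suc n - k - 1)) * a (Suc n - k - 1) * b k))"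
      by simp
    also have "\<dots> = (\<Sum>k\<le>n. of_nat (Suc n) * of_nat (n choose k) * ((1 + e * of_nat (n - k)) * a (n - k) * b k))"
    proof (rule sum.cong[OF refl])
      fix k assume "k \<in> {..n}"
      have "of_nat (Suc n choose k) * (of_nat (Suc n - k) :: complex) = of_nat (Suc n) * of_nat (n choose k)"
        using binomial_absorb_comp[of "Suc n" k] by (metis of_nat_mult mult.commute diff_Suc_1)
      then show "of_nat (Suc n choose k) *
      (of_nat (Suc n - k) * (1 + e * of_nat (Suc n - k - 1)) * a (Suc n - k - 1) * b k) =
         of_nat (Suc n) * of_nat (n choose k) * ((1 + e * of_nat (n - k)) * a (n - k) * b k)"
        by (simp add: algebra_simps)
    qed
    finally show ?thesis .
  qed
  have 2: "(\<Sum>k\<le>Suc n. of_nat (Suc n choose k) * (e * of_nat k * of_nat (k - 1) * a (Suc n - k) * b (k - 1)))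
    = (\<Sum>k\<le>n. of_nat (Suc n) * of_nat (n choose k) * (e * of_nat k * a (n - k) * b k))"
  proof -
    have "(\<Sum>k\<le>Suc n. of_nat (Suc n choose k) * (e * of_nat k * of_nat (k - 1) * a (Suc n - k) * b (k - 1)))
      = (\<Sum>k\<le>n. of_nat (Suc n choose Suc k) * (e * of_nat (Suc k) * of_nat k * a (n - k) * b k))"
      by (subst sum.atMost_Suc_shift) simp
    also have "\<dots> = (\<Sum>k\<le>n. of_nat (Suc n) * of_nat (n choose k) * (e * of_nat k * a (n - k) * b k))"
    proof (rule sum.cong[OF refl])
      fix k assume "k \<in> {..n}"
      have "of_nat (Suc n choose Suc k) * (of_nat (Suc k) :: complex) = of_nat (Suc n) * of_nat (n choose k)"
        using Suc_times_binomial[of k n] by (metis of_nat_mult mult.commute)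
      then show "of_nat (Suc n choose Suc k) * (e * of_nat (Suc k) * of_nat k * a (n - k) * b k) =
         of_nat (Suc n) * of_nat (n choose k) * (e * of_nat k * a (n - k) * b k)"
      proof -
        assume h: "of_nat (Suc n choose Suc k) * (of_nat (Suc k) :: complex) = of_nat (Suc n) * of_nat (n choose k)"
        have "of_nat (Suc n choose Suc k) * (e * of_nat (Suc k) * of_nat k * a (n - k) * b k) =
          (of_nat (Suc n choose Suc k) * of_nat (Suc k)) * (e * of_nat k * a (n - k) * b k)"
          by (simp only: mult_ac)
        also have "\<dots> = (of_nat (Suc n) * of_nat (n choose k)) * (e * of_nat k * a (n - k) * b k)"
          by (simp only: h)
        finally show ?thesis by (simp only: mult_ac)
      qed
    qed
    finally show ?thesis .
  qed
  have "(\<Sum>k\<le>Suc n. of_nat (Suc n choose k) *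
      (of_nat (Suc n - k) * (1 + e * of_nat (Suc n - k - 1)) * a (Suc n - k - 1) * b k
       + e * of_nat k * of_nat (k - 1) * a (Suc n - k) * b (k - 1)))
    = (\<Sum>k\<le>n. of_nat (Suc n) * of_nat (n choose k) * ((1 + e * of_nat (n - k)) * a (n - k) * b k))
      + (\<Sum>k\<le>n. of_nat (Suc n) * of_nat (n choose k) * (e * of_nat k * a (n - k) * b k))"
    unfolding 1[symmetric] 2[symmetric] by (simp only: distrib_left sum.distrib)
  also have "\<dots> = (\<Sum>k\<le>n. of_nat (Suc n) * (1 + e * of_nat n) * (of_nat (n choose k) * a (n - k) * b k))"
    unfolding sum.distrib[symmetric]
  proof (rule sum.cong[OF refl])
    fix k assume "k \<in> {..n}"
    then have "(of_nat (n - k) :: complex) + of_nat k = of_nat n" by (simp add: of_nat_diff)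
    then show "of_nat (Suc n) * of_nat (n choose k) * ((1 + e * of_nat (n - k)) * a (n - k) * b k) +
         of_nat (Suc n) * of_nat (n choose k) * (e * of_nat k * a (n - k) * b k) =
         of_nat (Suc n) * (1 + e * of_nat n) * (of_nat (n choose k) * a (n - k) * b k)"
    proof -
      assume h: "(of_nat (n - k) :: complex) + of_nat k = of_nat n"
      have "of_nat (Suc n) * of_nat (n choose k) * ((1 + e * of_nat (n - k)) * a (n - k) * b k) +
         of_nat (Suc n) * of_nat (n choose k) * (e * of_nat k * a (n - k) * b k) =
         of_nat (Suc n) * of_nat (n choose k) * a (n - k) * b k * (1 + e * (of_nat (n - k) + of_nat k))"
        by (simp add: algebra_simps)
      then show ?thesis unfolding h by (simp add: algebra_simps)
    qed
  qed
  also have "\<dots> = of_nat (Suc n) * (1 + e * of_nat n) * Econv a b n"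
    unfolding Econv_def by (simp add: sum_distrib_left)
  finally show ?thesis .
qed

lemma Econv_step:
  fixes z s l e :: complex
  assumes ha: "\<And>j. z * a j = a (Suc j) + l * of_nat j * a j + of_nat j * (1 + e * of_nat (j - 1)) * a (j - 1)"
    and hb: "\<And>k. s * b k = b (Suc k) + l * of_nat k * b k + e * of_nat k * of_nat (k - 1) * b (k - 1)"
  shows "Econv a b (Suc (Suc n)) = (z + s - l * of_nat (Suc n)) * Econv a b (Suc n)
      - of_nat (Suc n) * (1 + e * of_nat n) * Econv a b n"
proof -
  let ?m = "Suc n"
  have "(z + s - l * of_nat ?m) * Econv a b ?m =
     (\<Sum>k\<le>?m. of_nat (?m choose k) * (a (Suc ?m - k) * b k + a (?m - k) * b (Suc k)))
     + (\<Sum>k\<le>?m. of_nat (?m choose k) *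
      (of_nat (?m - k) * (1 + e * of_nat (?m - k - 1)) * a (?m - k - 1) * b k
       + e * of_nat k * of_nat (k - 1) * a (?m - k) * b (k - 1)))"
    unfolding Econv_def sum_distrib_left sum.distrib[symmetric]
  proof (rule sum.cong[OF refl])
    fix k assume k: "k \<in> {..?m}"
    have A: "z * a (?m - k) = a (Suc ?m - k) + l * of_nat (?m - k) * a (?m - k)
       + of_nat (?m - k) * (1 + e * of_nat (?m - k - 1)) * a (?m - k - 1)"
      using ha[of "?m - k"] k by (simp add: Suc_diff_le)
    have B: "s * b k = b (Suc k) + l * of_nat k * b k + e * of_nat k * of_nat (k - 1) * b (k - 1)"
      by (rule hb)
    have C: "(of_nat (?m - k) :: complex) = of_nat ?m - of_nat k" using k by (simp add: of_nat_diff)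
    have "(z + s - l * of_nat ?m) * (of_nat (?m choose k) * a (?m - k) * b k)
      = of_nat (?m choose k) * ((z * a (?m - k)) * b k + a (?m - k) * (s * b k) - l * of_nat ?m * a (?m - k) * b k)"
      by (simp add: algebra_simps)
    also have "\<dots> = of_nat (?m choose k) * (a (Suc ?m - k) * b k + a (?m - k) * b (Suc k)) +
         of_nat (?m choose k) *
         (of_nat (?m - k) * (1 + e * of_nat (?m - k - 1)) * a (?m - k - 1) * b k +
          e * of_nat k * of_nat (k - 1) * a (?m - k) * b (k - 1))"
      unfolding A B C by (simp add: algebra_simps)
    finally show "(z + s - l * of_nat ?m) * (of_nat (?m choose k) * a (?m - k) * b k) = \<dots>" .
  qed
  also have "\<dots> = Econv a b (Suc ?m) + of_nat (Suc n) * (1 + e * of_nat n) * Econv a b n"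
    by (simp only: Econv_pascal[symmetric] Econv_S2)
  finally show ?thesis by (simp add: algebra_simps)
qed



fun Qc :: "real \<Rightarrow> real \<Rightarrow> nat \<Rightarrow> complex \<Rightarrow> complex" where
  "Qc l e 0 w = 1"
| "Qc l e (Suc 0) w = w - of_real l"
| "Qc l e (Suc (Suc n)) w = (w - of_real (l * real (Suc (Suc n)))) * Qc l e (Suc n) w
     - of_real (e * real (Suc n) * real (Suc (Suc n))) * Qc l e n w"

definition pp :: "real \<Rightarrow> real \<Rightarrow> nat \<Rightarrow> complex \<Rightarrow> complex" where
  "pp l e k w = (if k = 0 then 1 else w * Qc l e (k - 1) w)"

lemma Qc_of_real: "Qc l e k (of_real s) = of_real (poly (Qpoly l e k) s)"
  by (induction l e k "of_real s :: complex" rule: Qc.induct) (simp_all add: algebra_simps)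

lemma Qc_cont: "continuous_on UNIV (Qc l e k)"
proof (induction k rule: nat_less_induct)
  case (1 n)
  show ?case
  proof (cases n)
    case 0 then show ?thesis by simp
  next
    case (Suc m) note m = this
    show ?thesis
    proof (cases m)
      case 0 then show ?thesis using m by (simp add: continuous_intros)
    next
      case (Suc k)
      have "continuous_on UNIV (Qc l e (Suc k))" "continuous_on UNIV (Qc l e k)"
        using 1 m Suc by auto
      then show ?thesis using m Suc
        by (simp add: continuous_intros)
    qed
  qed
qed

lemma Qc_rec: "w * Qc l e j w = Qc l e (Suc j) w + of_real l * of_nat (Suc j) * Qc l e j w
   + of_real e * of_nat j * of_nat (Suc j) * Qc l e (j - 1) w"
  by (cases j) (simp_all add: algebra_simps)

lemma pp_rec: "w * pp l e k w = pp l e (Suc k) w + of_real l * of_nat k * pp l e k w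
   + of_real e * of_nat k * of_nat (k - 1) * pp l e (k - 1) w"
proof (cases k)
  case 0 then show ?thesis by (simp add: pp_def)
next
  case (Suc j)
  have "w * pp l e k w = w * (w * Qc l e j w)" using Suc by (simp add: pp_def)
  also have "\<dots> = w * (Qc l e (Suc j) w + of_real l * of_nat (Suc j) * Qc l e j w
   + of_real e * of_nat j * of_nat (Suc j) * Qc l e (j - 1) w)" by (simp only: Qc_rec)
  also have "\<dots> = pp l e (Suc k) w + of_real l * of_nat k * pp l e k w
   + of_real e * of_nat k * of_nat (k - 1) * pp l e (k - 1) w"
    using Suc by (cases j) (simp_all add: pp_def algebra_simps)
  finally show ?thesis .
qed

lemma P_rec: "z * poly (Ppoly l e j) z = poly (Ppoly l e (Suc j)) z + of_real l * of_nat j * poly (Ppoly l e j) z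
   + of_nat j * (1 + of_real e * of_nat (j - 1)) * poly (Ppoly l e (j - 1)) z"
  by (cases j) (simp_all add: algebra_simps)

lemma P_shift: "poly (Ppoly l e n) (z + w) = Econv (\<lambda>j. poly (Ppoly l e j) z) (\<lambda>k. pp l e k w) n"
proof -
  let ?a = "\<lambda>j. poly (Ppoly l e j) z" and ?b = "\<lambda>k. pp l e k w"
  have "poly (Ppoly l e n) (z + w) = Econv ?a ?b n \<and> poly (Ppoly l e (Suc n)) (z + w) = Econv ?a ?b (Suc n)"
  proof (induction n)
    case 0
    show ?case by (simp add: Econv_def pp_def)
  next
    case (Suc n)
    have st: "Econv ?a ?b (Suc (Suc n)) = (z + w - of_real l * of_nat (Suc n)) * Econv ?a ?b (Suc n)
      - of_nat (Suc n) * (1 + of_real e * of_nat n) * Econv ?a ?b n"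
      by (rule Econv_step[OF P_rec pp_rec])
    have "poly (Ppoly l e (Suc (Suc n))) (z + w) = (z + w - of_real l * of_nat (Suc n)) * poly (Ppoly l e (Suc n)) (z + w)
      - of_nat (Suc n) * (1 + of_real e * of_nat n) * poly (Ppoly l e n) (z + w)"
      by (simp add: algebra_simps)
    then show ?case using Suc st by simp
  qed
  then show ?thesis by simp
qed

lemma Econv_split: "Econv a b n = a n * b 0 + (\<Sum>k<n. of_nat (n choose Suc k) * a (n - Suc k) * b (Suc k))"
proof (cases n)
  case 0 then show ?thesis by (simp add: Econv_def)
next
  case (Suc m)
  show ?thesis unfolding Econv_def Suc
    by (subst sum.atMost_Suc_shift) (simp add: lessThan_Suc_atMost)
qed

lemma P_quot:
  assumes "w \<noteq> 0"
  shows "(poly (Ppoly l e n) (z + w) - poly (Ppoly l e n) z) / w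
    = (\<Sum>k<n. of_nat (n choose Suc k) * poly (Ppoly l e (n - Suc k)) z * Qc l e k w)"
  using assms unfolding P_shift Econv_split by (simp add: pp_def sum_divide_distrib mult.assoc)



definition gfun :: "(complex \<Rightarrow> complex) \<Rightarrow> real \<Rightarrow> real \<Rightarrow> complex" where
  "gfun F x s = (if s = 0 then deriv F (of_real x)
            else (F (of_real (x + s)) - F (of_real x)) / of_real s)"

lemma orth_Q_integrable:
  assumes "orth_measure l e M"
  shows "integrable M (\<lambda>s. poly p s)"
proof -
  have m: "\<And>n. integrable M (\<lambda>x. x ^ n)" using assms unfolding orth_measure_def by blast
  have "integrable M (\<lambda>s. \<Sum>i\<le>degree p. coeff p i * s ^ i)"
    by (intro Bochner_Integration.integrable_sum Bochner_Integration.integrable_mult_right; rule m)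
  then show ?thesis by (simp add: poly_altdef)
qed

lemma orth_Q_int:
  assumes "orth_measure l e M"
  shows "(\<integral>s. poly (Qpoly l e k) s \<partial>M) = (if k = 0 then 1 else 0)"
proof -
  have "(\<integral>s. poly (Qpoly l e 0) s * poly (Qpoly l e k) s \<partial>M) =
        (if 0 = k then (\<Prod>j\<in>{1..k}. e * real j * real (j + 1)) else 0)"
    using assms unfolding orth_measure_def by blast
  then show ?thesis by auto
qed

lemma deriv_eq_lim:
  fixes F G :: "complex \<Rightarrow> complex"
  assumes "F field_differentiable (at z)" "isCont G 0"
    and "\<And>w. w \<noteq> 0 \<Longrightarrow> (F (z + w) - F z) / w = G w"
  shows "deriv F z = G 0"
proof -
  have "(F has_field_derivative deriv F z) (at z)"
    using assms(1) DERIV_deriv_iff_field_differentiable by blast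
  then have 1: "((\<lambda>h. (F (z + h) - F z) / h) \<longlongrightarrow> deriv F z) (at 0)"
    by (simp add: DERIV_def)
  have "(G \<longlongrightarrow> G 0) (at 0)" using assms(2) isCont_def by blast
  moreover have "\<forall>\<^sub>F h in at 0. G h = (F (z + h) - F z) / h"
      using assms(3) by (auto simp: eventually_at_filter)
  ultimately have 2: "((\<lambda>h. (F (z + h) - F z) / h) \<longlongrightarrow> G 0) (at 0)"
    by (rule Lim_transform_eventually)
  show ?thesis using tendsto_unique[OF _ 1 2] by simp
qed

lemma gfun_P:
  "gfun (\<lambda>z. poly (Ppoly l e n) z) x s =
    (\<Sum>k<n. of_nat (n choose Suc k) * poly (Ppoly l e (n - Suc k)) (of_real x) * of_real (poly (Qpoly l e k) s))"
proof (cases "s = 0")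
  case True
  let ?G = "\<lambda>w. (\<Sum>k<n. of_nat (n choose Suc k) * poly (Ppoly l e (n - Suc k)) (of_real x) * Qc l e k w)"
  have c: "isCont ?G 0"
    using Qc_cont by (intro continuous_intros) (auto simp: continuous_on_eq_continuous_at)
  have "deriv (\<lambda>z. poly (Ppoly l e n) z) (of_real x) = ?G 0"
    by (rule deriv_eq_lim[OF _ c]) (auto simp: P_quot field_differentiable_def intro: poly_DERIV)
  moreover have "Qc l e k 0 = of_real (poly (Qpoly l e k) 0)" for k
    using Qc_of_real[of l e k 0] by simp
  ultimately show ?thesis using True by (simp add: gfun_def)
next
  case False
  then show ?thesis unfolding gfun_def
    using P_quot[of "of_real s" l e n "of_real x"] by (simp add: Qc_of_real)
qed

lemma gfun_P_int:
  assumes "orth_measure l e M"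
  shows "integrable M (gfun (\<lambda>z. poly (Ppoly l e n) z) x)"
    "(\<integral>s. gfun (\<lambda>z. poly (Ppoly l e n) z) x s \<partial>M) = of_nat n * poly (Ppoly l e (n - 1)) (of_real x)"
proof -
  have ri: "\<And>k. integrable M (\<lambda>s. complex_of_real (poly (Qpoly l e k) s))"
    using orth_Q_integrable[OF assms] complex_of_real_integrable_eq by blast
  show "integrable M (gfun (\<lambda>z. poly (Ppoly l e n) z) x)"
    unfolding gfun_P by (intro Bochner_Integration.integrable_sum Bochner_Integration.integrable_mult_right; rule ri)
  have "(\<integral>s. gfun (\<lambda>z. poly (Ppoly l e n) z) x s \<partial>M) =
     (\<Sum>k<n. of_nat (n choose Suc k) * poly (Ppoly l e (n - Suc k)) (of_real x) * of_real (if k = 0 then 1 else 0))"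
    unfolding gfun_P using ri
    by (subst Bochner_Integration.integral_sum) (auto simp: orth_Q_int[OF assms])
  also have "\<dots> = of_nat n * poly (Ppoly l e (n - 1)) (of_real x)"
    by (cases n) (auto simp: sum.delta' lessThan_Suc_atMost[symmetric] if_distrib cong: if_cong)
  finally show "(\<integral>s. gfun (\<lambda>z. poly (Ppoly l e n) z) x s \<partial>M) = of_nat n * poly (Ppoly l e (n - 1)) (of_real x)" .
qed



lemma P_coeff: "coeff (Ppoly l e n) n = 1 \<and> (\<forall>k>n. coeff (Ppoly l e n) k = 0)"
proof (induction n rule: nat_less_induct)
  case (1 n)
  show ?case
  proof (cases n)
    case 0 then show ?thesis by auto
  next
    case (Suc m) note m = this
    show ?thesis
    proof (cases m)
      case 0 then show ?thesis using m by (auto simp: coeff_pCons split: nat.split)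
    next
      case (Suc k)
      have h1: "coeff (Ppoly l e (Suc k)) (Suc k) = 1 \<and> (\<forall>j>Suc k. coeff (Ppoly l e (Suc k)) j = 0)"
        and h2: "coeff (Ppoly l e k) k = 1 \<and> (\<forall>j>k. coeff (Ppoly l e k) j = 0)"
        using 1 m Suc by auto
      have e: "Ppoly l e n = pCons 0 (Ppoly l e (Suc k)) + smult (- complex_of_real (l * real (Suc k))) (Ppoly l e (Suc k))
         - smult (complex_of_real (real (Suc k) * (1 + e * real k))) (Ppoly l e k)"
        using m Suc by (simp add: mult_pCons_left algebra_simps)
      show ?thesis unfolding e using h1 h2 m Suc
        by (auto simp: coeff_pCons split: nat.split)
    qed
  qed
qed

lemma P_degree: "degree (Ppoly l e n) = n"
  using P_coeff[of l e n] by (metis degree_le le_antisym le_degree one_neq_zero)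

definition Cl :: "real measure \<Rightarrow> ((complex \<Rightarrow> complex) \<Rightarrow> (complex \<Rightarrow> complex)) \<Rightarrow> real \<Rightarrow> (complex \<Rightarrow> complex) \<Rightarrow> bool" where
  "Cl M D x F \<longleftrightarrow> integrable M (gfun F x) \<and> D F (of_real x) = (\<integral>s. gfun F x s \<partial>M)"

lemma Emin_poly: "(\<lambda>z. poly p z) \<in> Emin"
proof -
  have "\<forall>\<epsilon>>0. \<exists>C. \<forall>z. norm (poly p z) \<le> C * exp (\<epsilon> * norm z)"
  proof (induction p)
    case 0 then show ?case by (auto intro: exI[of _ 0])
  next
    case (pCons a p)
    show ?case
    proof (intro allI impI)
      fix \<epsilon> :: real assume e: "\<epsilon> > 0"
      then obtain C where C: "\<And>z. norm (poly p z) \<le> C * exp (\<epsilon> / 2 * norm z)"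
        using pCons(2) by (meson half_gt_zero)
      have "norm (poly p 0) \<le> C" using C[of 0] by simp
      then have C0: "C \<ge> 0" by (meson norm_ge_zero order_trans)
      show "\<exists>C. \<forall>z. norm (poly (pCons a p) z) \<le> C * exp (\<epsilon> * norm z)"
      proof (intro exI allI)
        fix z :: complex
        have t: "\<epsilon> / 2 * norm z \<le> exp (\<epsilon> / 2 * norm z)"
          using exp_ge_add_one_self[of "\<epsilon> / 2 * norm z"] by linarith
        have "norm z \<le> 2 / \<epsilon> * exp (\<epsilon> / 2 * norm z)"
          using t e by (simp add: field_simps)
        have "norm (poly (pCons a p) z) \<le> norm a + norm z * norm (poly p z)"
          by (simp add: norm_mult[symmetric] norm_triangle_ineq)
        also have "\<dots> \<le> norm a + (2 / \<epsilon> * exp (\<epsilon> / 2 * norm z)) * (C * exp (\<epsilon> / 2 * norm z))"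
          using \<open>norm z \<le> _\<close> C[of z] C0 e by (intro add_left_mono mult_mono) auto
        also have "\<dots> = norm a + 2 / \<epsilon> * C * exp (\<epsilon> * norm z)"
          by (simp add: exp_add[symmetric])
        also have "\<dots> \<le> norm a * exp (\<epsilon> * norm z) + 2 / \<epsilon> * C * exp (\<epsilon> * norm z)"
          using e by (intro add_right_mono) (simp add: mult_le_cancel_left1)
        also have "\<dots> = (norm a + 2 / \<epsilon> * C) * exp (\<epsilon> * norm z)"
          by (simp add: algebra_simps)
        finally show "norm (poly (pCons a p) z) \<le> (norm a + 2 / \<epsilon> * C) * exp (\<epsilon> * norm z)" .
      qed
    qed
  qed
  moreover have "(\<lambda>z. poly p z) holomorphic_on UNIV" by (intro holomorphic_intros)
  ultimately show ?thesis unfolding Emin_def by simp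
qed

lemma Emin_lin:
  assumes "F \<in> Emin" "G \<in> Emin"
  shows "(\<lambda>z. a * F z + b * G z) \<in> Emin"
proof -
  have h: "F holomorphic_on UNIV" "G holomorphic_on UNIV" using assms unfolding Emin_def by auto
  have "\<exists>C. \<forall>z. norm (a * F z + b * G z) \<le> C * exp (\<epsilon> * norm z)" if e: "\<epsilon> > 0" for \<epsilon>
  proof -
    obtain C1 where C1: "\<And>z. norm (F z) \<le> C1 * exp (\<epsilon> * norm z)" using assms(1) e unfolding Emin_def by blast
    obtain C2 where C2: "\<And>z. norm (G z) \<le> C2 * exp (\<epsilon> * norm z)" using assms(2) e unfolding Emin_def by blast
    show ?thesis
    proof (intro exI allI)
      fix z
      have "norm (a * F z + b * G z) \<le> norm a * norm (F z) + norm b * norm (G z)"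
        by (metis norm_mult norm_triangle_ineq)
      also have "\<dots> \<le> norm a * (C1 * exp (\<epsilon> * norm z)) + norm b * (C2 * exp (\<epsilon> * norm z))"
        by (intro add_mono mult_left_mono C1 C2) auto
      also have "\<dots> = (norm a * C1 + norm b * C2) * exp (\<epsilon> * norm z)" by (simp add: algebra_simps)
      finally show "norm (a * F z + b * G z) \<le> (norm a * C1 + norm b * C2) * exp (\<epsilon> * norm z)" .
    qed
  qed
  moreover have "(\<lambda>z. a * F z + b * G z) holomorphic_on UNIV" using h by (intro holomorphic_intros)
  ultimately show ?thesis unfolding Emin_def by simp
qed

lemma Emin_diff:
  assumes "F \<in> Emin" "G \<in> Emin"
  shows "(\<lambda>z. F z - G z) \<in> Emin"
  using Emin_lin[OF assms, of 1 "-1"] by simp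

lemma Emin_diffble: "F \<in> Emin \<Longrightarrow> F field_differentiable (at z)"
  unfolding Emin_def using holomorphic_on_imp_differentiable_at by blast

lemma gfun_lin:
  assumes "F \<in> Emin" "G \<in> Emin"
  shows "gfun (\<lambda>z. a * F z + b * G z) x s = a * gfun F x s + b * gfun G x s"
proof (cases "s = 0")
  case True
  have "deriv (\<lambda>z. a * F z + b * G z) (of_real x) = a * deriv F (of_real x) + b * deriv G (of_real x)"
    using Emin_diffble[OF assms(1)] Emin_diffble[OF assms(2)]
    by (subst deriv_add) (auto intro!: field_differentiable_mult field_differentiable_const simp: deriv_cmult)
  then show ?thesis using True by (simp add: gfun_def)
next
  case False
  then show ?thesis by (simp add: gfun_def field_simps)
qed

context
  fixes l e :: real and M :: "real measure" and D :: "(complex \<Rightarrow> complex) \<Rightarrow> (complex \<Rightarrow> complex)" and x :: real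
  assumes orth: "orth_measure l e M" and low: "lowering_ext l e D"
begin

lemma D_lin: "F \<in> Emin \<Longrightarrow> G \<in> Emin \<Longrightarrow> D (\<lambda>z. a * F z + b * G z) = (\<lambda>z. a * D F z + b * D G z)"
  using low unfolding lowering_ext_def by blast

lemma D_P: "D (\<lambda>z. poly (Ppoly l e n) z) = (\<lambda>z. of_nat n * poly (Ppoly l e (n - 1)) z)"
  using low unfolding lowering_ext_def by blast

lemma Cl_lin: assumes "F \<in> Emin" "G \<in> Emin" "Cl M D x F" "Cl M D x G"
  shows "Cl M D x (\<lambda>z. a * F z + b * G z)"
proof -
  have i: "integrable M (gfun F x)" "integrable M (gfun G x)" using assms(3,4) by (auto simp: Cl_def)
  have g: "gfun (\<lambda>z. a * F z + b * G z) x = (\<lambda>s. a * gfun F x s + b * gfun G x s)"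
    using gfun_lin[OF assms(1,2)] by auto
  show ?thesis unfolding Cl_def g D_lin[OF assms(1,2)] using i assms(3,4)
    by (auto simp: Cl_def)
qed

lemma Cl_zero: "Cl M D x (\<lambda>z. 0)"
proof -
  have "D (\<lambda>z. 0 * poly (Ppoly l e 0) z + 0 * poly (Ppoly l e 0) z) = (\<lambda>z. 0 * D (\<lambda>z. poly (Ppoly l e 0) z) z + 0 * D (\<lambda>z. poly (Ppoly l e 0) z) z)"
    using D_lin Emin_poly by blast
  then have "D (\<lambda>z. 0) = (\<lambda>z. 0)" by simp
  moreover have "gfun (\<lambda>z. 0) x = (\<lambda>s. 0)" by (auto simp: gfun_def fun_eq_iff)
  ultimately show ?thesis by (simp add: Cl_def)
qed

lemma Cl_P: "Cl M D x (\<lambda>z. poly (Ppoly l e n) z)"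
  unfolding Cl_def using gfun_P_int[OF orth] D_P by simp

lemma Cl_poly: "Cl M D x (\<lambda>z. poly p z)"
proof (induction "degree p" arbitrary: p rule: less_induct)
  case less
  show ?case
  proof (cases "p = 0")
    case True
    have e: "poly p = (\<lambda>z. 0)" using True by (simp add: fun_eq_iff)
    show ?thesis unfolding e by (rule Cl_zero)
  next
    case False
    define d where "d = degree p"
    define c where "c = lead_coeff p"
    define r where "r = p - smult c (Ppoly l e d)"
    have cr: "coeff r k = 0" if "k \<ge> d" for k
    proof (cases "k = d")
      case True then show ?thesis using P_coeff[of l e d] by (simp add: r_def c_def d_def)
    next
      case False then have "k > d" using that by simp
      then show ?thesis using P_coeff[of l e d] by (simp add: r_def c_def d_def coeff_eq_0)
    qed
    have Cr: "Cl M D x (\<lambda>z. poly r z)"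
    proof (cases "r = 0")
      case True
      have e: "poly r = (\<lambda>z. 0)" using True by (simp add: fun_eq_iff)
      show ?thesis unfolding e by (rule Cl_zero)
    next
      case False
      have "degree r \<le> d" using cr by (intro degree_le) auto
      moreover have "degree r \<noteq> d" using cr[of "degree r"] False by auto
      ultimately have "degree r < degree p" by (simp add: d_def)
      then show ?thesis using less by blast
    qed
    have pe: "(\<lambda>z. poly p z) = (\<lambda>z. c * poly (Ppoly l e d) z + 1 * poly r z)"
      by (simp add: r_def fun_eq_iff)
    show ?thesis unfolding pe by (rule Cl_lin[OF Emin_poly Emin_poly Cl_P Cr])
  qed
qed

end



lemma Q_rec: "s * poly (Qpoly l e j) s = poly (Qpoly l e (Suc j)) s + l * real (Suc j) * poly (Qpoly l e j) s
   + e * real j * real (Suc j) * poly (Qpoly l e (j - 1)) s"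
  by (cases j) (simp_all add: algebra_simps)

lemma pow_fact_le_exp: "(x::real) \<ge> 0 \<Longrightarrow> x ^ n / fact n \<le> exp x"
proof -
  assume x: "x \<ge> 0"
  have s: "(\<lambda>n. x ^ n / fact n) sums exp x" using exp_converges[of x] by (simp add: divide_inverse_commute)
  have "sum (\<lambda>n. x ^ n / fact n) {n} \<le> (\<Sum>n. x ^ n / fact n)"
    by (rule sum_le_suminf) (use s x in \<open>auto simp: sums_iff\<close>)
  then show ?thesis using s by (simp add: sums_iff)
qed

lemma pow_plus_neg_nonneg: "0 \<le> (x::real) ^ n + (- x) ^ n"
proof (cases "even n")
  case True then show ?thesis by (simp add: zero_le_even_power)
next
  case False then show ?thesis by simp
qed

context
  fixes l e :: real and M
  assumes orth: "orth_measure l e M" and e0: "e \<ge> 0"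
begin

definition amom :: "nat \<Rightarrow> nat \<Rightarrow> real" where
  "amom j i = (\<integral>s. s ^ j * poly (Qpoly l e i) s \<partial>M)"

lemma mom_int: "integrable M (\<lambda>s. s ^ j * poly p s)"
proof -
  show ?thesis using orth_Q_integrable[OF orth, of "monom 1 j * p"] by (simp add: poly_monom)
qed

lemma amom_0: "amom 0 i = (if i = 0 then 1 else 0)"
  unfolding amom_def using orth_Q_int[OF orth] by simp

lemma amom_Suc: "amom (Suc j) i = amom j (Suc i) + l * real (Suc i) * amom j i + e * real i * real (Suc i) * amom j (i - 1)"
proof -
  have "amom (Suc j) i = (\<integral>s. s ^ j * (s * poly (Qpoly l e i) s) \<partial>M)"
    unfolding amom_def by (simp add: algebra_simps)
  also have "\<dots> = (\<integral>s. s ^ j * poly (Qpoly l e (Suc i)) s + (l * real (Suc i)) * (s ^ j * poly (Qpoly l e i) s)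
       + (e * real i * real (Suc i)) * (s ^ j * poly (Qpoly l e (i - 1)) s) \<partial>M)"
    unfolding Q_rec by (simp add: algebra_simps)
  also have "\<dots> = amom j (Suc i) + l * real (Suc i) * amom j i + e * real i * real (Suc i) * amom j (i - 1)"
    unfolding amom_def using mom_int by simp
  finally show ?thesis .
qed

lemma amom_zero: "i > j \<Longrightarrow> amom j i = 0"
proof (induction j arbitrary: i)
  case 0 then show ?case by (simp add: amom_0)
next
  case (Suc j)
  then show ?case by (simp add: amom_Suc)
qed

definition Bc :: real where "Bc = 1 + \<bar>l\<bar> + e"

lemma Bc_ge: "Bc \<ge> 1" using e0 by (simp add: Bc_def)

lemma amom_bound: "j \<le> N \<Longrightarrow> \<bar>amom j i\<bar> \<le> Bc ^ j * real (N + 1) ^ (j + i)"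
proof (induction j arbitrary: i)
  case 0
  have "1 \<le> real (N + 1) ^ i" by simp
  then show ?case by (simp add: amom_0)
next
  case (Suc j)
  have jN: "j \<le> N" using Suc by simp
  show ?case
  proof (cases "i > Suc j")
    case True then show ?thesis using amom_zero[OF True] Bc_ge by simp
  next
    case False
    then have iN: "i \<le> N" using Suc by simp
    define K where "K = real (N + 1)"
    have K1: "K \<ge> 1" by (simp add: K_def)
    have h1: "\<bar>amom j (Suc i)\<bar> \<le> Bc ^ j * K ^ (j + i + 1)" using Suc.IH[OF jN, of "Suc i"] by (simp add: K_def)
    have h2: "\<bar>amom j i\<bar> \<le> Bc ^ j * K ^ (j + i)" using Suc.IH[OF jN, of i] by (simp add: K_def)
    have h3: "e * real i * real (Suc i) * \<bar>amom j (i - 1)\<bar> \<le> e * (Bc ^ j * K ^ (j + i + 1))"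
    proof (cases i)
      case 0 then show ?thesis using e0 Bc_ge K1 by (auto intro!: mult_nonneg_nonneg)
    next
      case (Suc i')
      have a: "\<bar>amom j (i - 1)\<bar> \<le> Bc ^ j * K ^ (j + i')" using Suc.IH[OF jN, of i'] Suc by (simp add: K_def)
      have b: "real i * real (Suc i) \<le> K * K" using iN unfolding K_def by (intro mult_mono) auto
      have "real i * real (Suc i) * \<bar>amom j (i - 1)\<bar> \<le> (K * K) * (Bc ^ j * K ^ (j + i'))"
        by (rule mult_mono[OF b a]) auto
      also have "\<dots> = Bc ^ j * K ^ (j + i + 1)" using Suc by (simp add: power_add algebra_simps)
      finally show ?thesis using e0 by (simp add: mult.assoc mult_left_mono)
    qed
    have h2': "\<bar>l\<bar> * real (Suc i) * \<bar>amom j i\<bar> \<le> \<bar>l\<bar> * (Bc ^ j * K ^ (j + i + 1))"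
    proof -
      have "real (Suc i) * \<bar>amom j i\<bar> \<le> K * (Bc ^ j * K ^ (j + i))"
        using h2 iN unfolding K_def by (intro mult_mono) auto
      also have "\<dots> = Bc ^ j * K ^ (j + i + 1)" by (simp add: algebra_simps)
      finally show ?thesis by (simp add: mult.assoc mult_left_mono)
    qed
    have "\<bar>amom (Suc j) i\<bar> \<le> \<bar>amom j (Suc i)\<bar> + \<bar>l\<bar> * real (Suc i) * \<bar>amom j i\<bar> + e * real i * real (Suc i) * \<bar>amom j (i - 1)\<bar>"
      unfolding amom_Suc using e0 by (simp add: abs_mult abs_triangle_ineq add_mono order_trans[OF abs_triangle_ineq])
    also have "\<dots> \<le> Bc ^ j * K ^ (j + i + 1) + \<bar>l\<bar> * (Bc ^ j * K ^ (j + i + 1)) + e * (Bc ^ j * K ^ (j + i + 1))"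
      using h1 h2' h3 by linarith
    also have "\<dots> = Bc ^ Suc j * K ^ (Suc j + i)" by (simp add: Bc_def algebra_simps)
    finally show ?thesis by (simp add: K_def)
  qed
qed

lemma mom_bound: "\<bar>\<integral>s. s ^ n \<partial>M\<bar> \<le> exp 1 * (Bc * exp 1) ^ n * fact n"
proof -
  have "\<bar>\<integral>s. s ^ n \<partial>M\<bar> = \<bar>amom n 0\<bar>" by (simp add: amom_def)
  also have "\<dots> \<le> Bc ^ n * real (n + 1) ^ n" using amom_bound[of n n 0] by simp
  also have "\<dots> \<le> Bc ^ n * (exp 1 * exp 1 ^ n * fact n)"
  proof -
    have f: "fact (Suc n) = real (Suc n) * fact n" by (simp add: fact_Suc)
    have "real (n + 1) ^ n / fact n = real (Suc n) ^ Suc n / fact (Suc n)"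
      unfolding f power_Suc by simp
    also have "\<dots> = real (n+1) ^ (n + 1) / fact (n + 1)" by simp
    finally have "real (n + 1) ^ n / fact n \<le> real (n+1) ^ (n + 1) / fact (n + 1)" by simp
    also have "\<dots> \<le> exp (real (n + 1))" by (rule pow_fact_le_exp) simp
    finally have "real (n + 1) ^ n \<le> exp (real (n + 1)) * fact n" by (simp add: field_simps)
    also have "exp (real (n + 1)) = exp 1 * exp 1 ^ n" by (simp add: exp_add[symmetric] exp_of_nat_mult[symmetric] algebra_simps)
    finally show ?thesis using Bc_ge by (intro mult_left_mono) auto
  qed
  also have "\<dots> = exp 1 * (Bc * exp 1) ^ n * fact n" by (simp add: power_mult_distrib algebra_simps)
  finally show ?thesis .
qed

lemma exp_integrable: "\<exists>\<rho>>0. integrable M (\<lambda>s. exp (\<rho> * \<bar>s\<bar>))"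
proof -
  define \<rho> where "\<rho> = 1 / (2 * Bc * exp 1)"
  have \<rho>0: "\<rho> > 0" using Bc_ge by (simp add: \<rho>_def)
  have q: "\<rho> * Bc * exp 1 = 1/2" using Bc_ge by (simp add: \<rho>_def)
  define c where "c n = (\<rho> ^ n + (- \<rho>) ^ n) / fact n" for n
  define t where "t n s = c n * s ^ n" for n s
  have m: "(- (\<rho> * s)) ^ n = (- \<rho>) ^ n * s ^ n" for s :: real and n
    by (metis minus_mult_left power_mult_distrib)
  have t_eq: "t n s = ((\<rho> * s) ^ n + (- (\<rho> * s)) ^ n) / fact n" for n s
    unfolding t_def c_def m power_mult_distrib by (simp add: field_simps)
  have t_nn: "t n s \<ge> 0" for n s unfolding t_eq by (intro divide_nonneg_pos pow_plus_neg_nonneg) auto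
  have t_sums: "(\<lambda>n. t n s) sums (exp (\<rho> * s) + exp (- (\<rho> * s)))" for s
  proof -
    have "(\<lambda>n. (\<rho> * s) ^ n / fact n + (- (\<rho> * s)) ^ n / fact n) sums (exp (\<rho> * s) + exp (- (\<rho> * s)))"
      using sums_add[OF exp_converges[of "\<rho> * s"] exp_converges[of "- (\<rho> * s)"]] by (simp add: divide_inverse_commute)
    then show ?thesis unfolding t_eq by (simp add: add_divide_distrib)
  qed
  have t_int: "integrable M (t n)" for n
    unfolding t_def using orth unfolding orth_measure_def by auto
  have c_bound: "\<bar>\<integral>s. t n s \<partial>M\<bar> \<le> 2 * exp 1 * (1/2) ^ n" for n
  proof -
    have "\<bar>\<integral>s. t n s \<partial>M\<bar> = \<bar>c n\<bar> * \<bar>\<integral>s. s ^ n \<partial>M\<bar>" unfolding t_def by (simp add: abs_mult)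
    also have "\<dots> \<le> (2 * \<rho> ^ n / fact n) * (exp 1 * (Bc * exp 1) ^ n * fact n)"
    proof (intro mult_mono mom_bound)
      have "\<bar>\<rho> ^ n + (- \<rho>) ^ n\<bar> \<le> 2 * \<rho> ^ n" using \<rho>0 by (simp add: abs_triangle_ineq order_trans[OF abs_triangle_ineq] power_abs)
      then show "\<bar>c n\<bar> \<le> 2 * \<rho> ^ n / fact n" unfolding c_def by (simp add: divide_right_mono)
    qed (use \<rho>0 in auto)
    also have "\<dots> = 2 * exp 1 * (\<rho> * Bc * exp 1) ^ n" by (simp add: power_mult_distrib)
    finally show ?thesis unfolding q .
  qed
  have summ: "summable (\<lambda>n. \<integral>s. t n s \<partial>M)"
    by (rule summable_comparison_test'[where g = "\<lambda>n. 2 * exp 1 * (1/2) ^ n"])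
       (use c_bound in \<open>auto intro: summable_mult summable_geometric\<close>)
  have sM: "sets M = sets borel" using orth unfolding orth_measure_def by blast
  have "(\<lambda>s. exp (\<rho> * \<bar>s\<bar>)) \<in> borel_measurable borel"
    by (intro borel_measurable_continuous_onI continuous_intros)
  then have meas: "(\<lambda>s. exp (\<rho> * \<bar>s\<bar>)) \<in> borel_measurable M"
    using measurable_cong_sets[OF sM refl] by blast
  have "(\<integral>\<^sup>+ s. ennreal (norm (exp (\<rho> * \<bar>s\<bar>))) \<partial>M) \<le> (\<integral>\<^sup>+ s. (\<Sum>n. ennreal (t n s)) \<partial>M)"
  proof (rule nn_integral_mono)
    fix s
    have "exp (\<rho> * \<bar>s\<bar>) \<le> exp (\<rho> * s) + exp (- (\<rho> * s))"
      by (cases "s \<ge> 0") (auto simp: add_increasing2 add_increasing)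
    also have "\<dots> = (\<Sum>n. t n s)" using t_sums by (simp add: sums_iff)
    finally have le: "exp (\<rho> * \<bar>s\<bar>) \<le> (\<Sum>n. t n s)" .
    have "(\<Sum>n. ennreal (t n s)) = ennreal (\<Sum>n. t n s)"
      by (rule suminf_ennreal2) (use t_nn t_sums in \<open>auto simp: sums_iff\<close>)
    then show "ennreal (norm (exp (\<rho> * \<bar>s\<bar>))) \<le> (\<Sum>n. ennreal (t n s))"
      using le by (simp add: ennreal_leI)
  qed
  also have "\<dots> = (\<Sum>n. \<integral>\<^sup>+ s. ennreal (t n s) \<partial>M)"
    by (rule nn_integral_suminf) (use t_int in auto)
  also have "\<dots> = (\<Sum>n. ennreal (\<integral>s. t n s \<partial>M))"
    by (intro arg_cong[where f=suminf] ext nn_integral_eq_integral t_int) (auto simp: t_nn)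
  also have "\<dots> = ennreal (\<Sum>n. \<integral>s. t n s \<partial>M)"
    by (rule suminf_ennreal2[OF _ summ]) (auto intro: integral_nonneg_AE t_nn)
  also have "\<dots> < \<infinity>" by simp
  finally have "(\<integral>\<^sup>+ s. ennreal (norm (exp (\<rho> * \<bar>s\<bar>))) \<partial>M) < \<infinity>" .
  then have "integrable M (\<lambda>s. exp (\<rho> * \<bar>s\<bar>))" by (intro integrableI_bounded meas)
  then show ?thesis using \<rho>0 by blast
qed

end



definition cf :: "(complex \<Rightarrow> complex) \<Rightarrow> nat \<Rightarrow> complex" where
  "cf F n = (deriv ^^ n) F 0 / of_nat (fact n)"

lemma Nnorm_cf: "Nnorm q F = (\<Sum>n. (norm (cf F n))\<^sup>2 * (fact n)\<^sup>2 * 2 ^ (n * q))"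
  unfolding Nnorm_def cf_def ..

lemma Emin_hol: "F \<in> Emin \<Longrightarrow> F holomorphic_on UNIV"
  unfolding Emin_def by auto

lemma taylor:
  assumes "F holomorphic_on UNIV"
  shows "(\<lambda>n. cf F n * z ^ n) sums F z"
proof -
  have "F holomorphic_on ball 0 (norm z + 1)" using assms holomorphic_on_subset by blast
  moreover have "z \<in> ball 0 (norm z + 1)" by simp
  ultimately show ?thesis using holomorphic_power_series[of F 0 "norm z + 1" z]
    by (simp add: cf_def)
qed

lemma cauchy_coeff:
  assumes F: "F \<in> Emin" and \<rho>: "\<rho> > 0"
  shows "\<exists>C\<ge>0. \<forall>n. norm (cf F n) * fact n \<le> C * \<rho> ^ n"
proof -
  define \<epsilon> where "\<epsilon> = \<rho> / exp 1"
  have \<epsilon>: "\<epsilon> > 0" using \<rho> by (simp add: \<epsilon>_def)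
  obtain C where C: "\<And>z. norm (F z) \<le> C * exp (\<epsilon> * norm z)" using F \<epsilon> unfolding Emin_def by blast
  have "norm (F 0) \<le> C" using C[of 0] by simp
  then have C0: "C \<ge> 0" by (meson norm_ge_zero order_trans)
  have hol: "F holomorphic_on UNIV" using F by (rule Emin_hol)
  have "norm (cf F n) * fact n \<le> C * \<rho> ^ n" for n
  proof (cases "n = 0")
    case True then show ?thesis using \<open>norm (F 0) \<le> C\<close> by (simp add: cf_def)
  next
    case False
    define r where "r = real n / \<epsilon>"
    have r: "r > 0" using False \<epsilon> by (simp add: r_def)
    have "norm ((deriv ^^ n) F 0) \<le> fact n * (C * exp (\<epsilon> * r)) / r ^ n"
    proof (rule Cauchy_inequality)
      show "F holomorphic_on ball 0 r" using hol holomorphic_on_subset by blast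
      show "continuous_on (cball 0 r) F"
        using hol holomorphic_on_imp_continuous_on continuous_on_subset by blast
      show "norm (F x) \<le> C * exp (\<epsilon> * r)" if "norm (0 - x) = r" for x
        using C[of x] that by simp
    qed (use r in auto)
    also have "\<dots> = C * \<rho> ^ n * (fact n / real n ^ n)"
    proof -
      have e: "exp (\<epsilon> * r) = exp 1 ^ n" using \<epsilon> by (simp add: r_def exp_of_nat_mult[symmetric])
      have rr: "r ^ n = real n ^ n / \<epsilon> ^ n" by (simp add: r_def power_divide)
      have "\<rho> = exp 1 * \<epsilon>" by (simp add: \<epsilon>_def)
      then show ?thesis unfolding e rr using \<epsilon> False by (simp add: power_mult_distrib field_simps)
    qed
    also have "\<dots> \<le> C * \<rho> ^ n * 1"
    proof (intro mult_left_mono)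
      show "fact n / real n ^ n \<le> 1" using fact_le_power[of n] False by simp
    qed (use C0 \<rho> in auto)
    finally show ?thesis by (simp add: cf_def norm_divide)
  qed
  then show ?thesis using C0 by blast
qed

lemma Nsum:
  assumes F: "F \<in> Emin"
  shows "summable (\<lambda>n. (norm (cf F n))\<^sup>2 * (fact n)\<^sup>2 * 2 ^ (n * q))"
proof -
  define \<rho> :: real where "\<rho> = (1/2) ^ (q + 1)"
  have \<rho>: "\<rho> > 0" by (simp add: \<rho>_def)
  obtain C where C0: "C \<ge> 0" and C: "\<And>n. norm (cf F n) * fact n \<le> C * \<rho> ^ n"
    using cauchy_coeff[OF F \<rho>] by blast
  have t4: "(2::real) ^ (q * 2) = 4 ^ q" using power_mult[of "2::real" 2 q] by (simp add: mult.commute)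
  have q: "\<rho>\<^sup>2 * 2 ^ q = (1/2) ^ (q + 2)"
    by (simp add: t4 \<rho>_def power_mult_distrib[symmetric] power_add[symmetric] power_mult[symmetric] field_simps)
  have b: "(norm (cf F n))\<^sup>2 * (fact n)\<^sup>2 * 2 ^ (n * q) \<le> C\<^sup>2 * ((1/2) ^ (q + 2)) ^ n" for n
  proof -
    have "(norm (cf F n))\<^sup>2 * (fact n)\<^sup>2 * 2 ^ (n * q) = (norm (cf F n) * fact n)\<^sup>2 * 2 ^ (n * q)"
      by (simp add: power_mult_distrib)
    also have "\<dots> \<le> (C * \<rho> ^ n)\<^sup>2 * 2 ^ (n * q)"
      using C[of n] by (intro mult_right_mono power_mono) auto
    also have "\<dots> = C\<^sup>2 * (\<rho>\<^sup>2 * 2 ^ q) ^ n"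
      by (simp add: power_mult_distrib power_mult[symmetric] mult.commute)
    finally show ?thesis unfolding q .
  qed
  show ?thesis
    by (rule summable_comparison_test'[OF summable_mult[OF summable_geometric], of _ 0])
       (use b power_le_one[of "1/2::real" q] in auto)
qed

lemma Emin_pt:
  assumes G: "G \<in> Emin"
  shows "norm (G z) \<le> sqrt (Nnorm 0 G) * exp (norm z)"
proof -
  define a where "a n = (norm (cf G n))\<^sup>2 * (fact n)\<^sup>2 * 2 ^ (n * 0)" for n
  have sa: "summable a" unfolding a_def by (rule Nsum[OF G])
  have N: "Nnorm 0 G = suminf a" unfolding Nnorm_cf a_def ..
  have an: "a n \<le> suminf a" for n
    using sum_le_suminf[OF sa, of "{n}"] by (simp add: a_def)
  have cb: "norm (cf G n) * fact n \<le> sqrt (Nnorm 0 G)" for n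
    using an[of n] unfolding N by (intro real_le_rsqrt) (simp add: a_def power_mult_distrib)
  have s1: "(\<lambda>n. cf G n * z ^ n) sums G z" by (rule taylor[OF Emin_hol[OF G]])
  have s2: "(\<lambda>n. sqrt (Nnorm 0 G) * (norm z ^ n / fact n)) sums (sqrt (Nnorm 0 G) * exp (norm z))"
    using sums_mult[OF exp_converges[of "norm z"]] by (simp add: divide_inverse_commute)
  show ?thesis
  proof (rule norm_sums_le[OF s1 s2])
    fix n
    have "norm (cf G n) \<le> sqrt (Nnorm 0 G) / fact n" using cb[of n] by (simp add: field_simps)
    then have "norm (cf G n) * norm z ^ n \<le> sqrt (Nnorm 0 G) / fact n * norm z ^ n"
      by (intro mult_right_mono) auto
    then show "norm (cf G n * z ^ n) \<le> sqrt (Nnorm 0 G) * (norm z ^ n / fact n)"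
      by (simp add: norm_mult norm_power)
  qed
qed

lemma higher_deriv_poly: "(deriv ^^ n) (poly p) = poly ((pderiv ^^ n) (p :: complex poly))"
proof (induction n)
  case 0 then show ?case by simp
next
  case (Suc n)
  have dp: "deriv (poly q) = poly (pderiv q)" for q :: "complex poly"
    by (rule ext) (rule DERIV_imp_deriv[OF poly_DERIV])
  show ?case by (simp only: funpow.simps(2) o_apply Suc.IH dp)
qed

lemma cf_poly: "cf (poly p) n = coeff (p :: complex poly) n"
proof -
  have "(deriv ^^ n) (poly p) 0 = fact n * coeff p n"
    by (simp add: higher_deriv_poly poly_0_coeff_0 coeff_higher_pderiv pochhammer_fact)
  then show ?thesis by (simp add: cf_def)
qed

definition pN :: "(complex \<Rightarrow> complex) \<Rightarrow> nat \<Rightarrow> complex poly" where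
  "pN F N = (\<Sum>n<N. monom (cf F n) n)"

lemma coeff_pN: "coeff (pN F N) n = (if n < N then cf F n else 0)"
  by (simp add: pN_def coeff_sum coeff_monom)

lemma poly_pN: "poly (pN F N) w = (\<Sum>n<N. cf F n * w ^ n)"
  by (simp add: pN_def poly_sum poly_monom)

lemma cf_diff:
  assumes "F \<in> Emin"
  shows "cf (\<lambda>z. poly (pN F N) z - F z) n = (if n < N then 0 else - cf F n)"
proof -
  have "(deriv ^^ n) (\<lambda>z. poly (pN F N) z - F z) 0 = (deriv ^^ n) (poly (pN F N)) 0 - (deriv ^^ n) F 0"
  proof -
    have h: "(\<lambda>z. poly (pN F N) z) holomorphic_on UNIV" by (intro holomorphic_intros)
    show ?thesis using higher_deriv_diff[OF h Emin_hol[OF assms], of 0 n] by simp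
  qed
  then have "cf (\<lambda>z. poly (pN F N) z - F z) n = cf (poly (pN F N)) n - cf F n"
    by (simp add: cf_def diff_divide_distrib)
  then show ?thesis by (simp add: cf_poly coeff_pN)
qed

lemma Nnorm_tail:
  assumes F: "F \<in> Emin"
  shows "(\<lambda>N. Nnorm q (\<lambda>z. poly (pN F N) z - F z)) \<longlonglongrightarrow> 0"
proof -
  define a where "a n = (norm (cf F n))\<^sup>2 * (fact n)\<^sup>2 * 2 ^ (n * q)" for n
  have sa: "summable a" unfolding a_def by (rule Nsum[OF F])
  have e: "Nnorm q (\<lambda>z. poly (pN F N) z - F z) = suminf a - (\<Sum>n<N. a n)" for N
  proof -
    have "(\<lambda>n. a n - (if n \<in> {..<N} then a n else 0)) sums (suminf a - (\<Sum>n\<in>{..<N}. a n))"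
      by (intro sums_diff summable_sums[OF sa] sums_If_finite_set) simp
    moreover have "(\<lambda>n. a n - (if n \<in> {..<N} then a n else 0)) =
        (\<lambda>n. (norm (cf (\<lambda>z. poly (pN F N) z - F z) n))\<^sup>2 * (fact n)\<^sup>2 * 2 ^ (n * q))"
      by (auto simp: cf_diff[OF F] a_def fun_eq_iff)
    ultimately show ?thesis unfolding Nnorm_cf by (simp add: sums_iff)
  qed
  have "(\<lambda>N. suminf a - (\<Sum>n<N. a n)) \<longlonglongrightarrow> suminf a - suminf a"
    by (intro tendsto_diff tendsto_const summable_LIMSEQ[OF sa])
  then show ?thesis unfolding e by simp
qed



lemma deriv_series:
  assumes G: "G holomorphic_on UNIV"
  shows "(\<lambda>n. of_nat (Suc n) * cf G (Suc n) * w ^ n) sums deriv G w"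
proof -
  have "deriv G holomorphic_on UNIV" using G by (intro holomorphic_deriv) auto
  then have s: "(\<lambda>n. cf (deriv G) n * w ^ n) sums deriv G w" by (rule taylor)
  have "cf (deriv G) n = of_nat (Suc n) * cf G (Suc n)" for n
  proof -
    have fp: "(deriv ^^ Suc n) G = (deriv ^^ n) (deriv G)" by (simp only: funpow_Suc_right o_apply)
    have a: "cf G (Suc n) = (deriv ^^ n) (deriv G) 0 / (of_nat (Suc n) * fact n)"
      unfolding cf_def fp of_nat_fact unfolding fact_Suc ..
    have b: "cf (deriv G) n = (deriv ^^ n) (deriv G) 0 / fact n"
      unfolding cf_def by (simp add: of_nat_fact)
    have nz: "(of_nat (Suc n) :: complex) \<noteq> 0" by (simp del: of_nat_Suc)
    show ?thesis unfolding a b times_divide_eq_right nonzero_mult_divide_mult_cancel_left[OF nz] ..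
  qed
  then show ?thesis using s by simp
qed

lemma deriv_bound:
  assumes G: "G holomorphic_on UNIV" and C0: "C \<ge> 0" and \<rho>: "\<rho> > 0"
    and cb: "\<And>n. norm (cf G n) * fact n \<le> C * \<rho> ^ n"
  shows "norm (deriv G w) \<le> C * \<rho> * exp (\<rho> * norm w)"
proof -
  have s2: "(\<lambda>n. C * \<rho> * ((\<rho> * norm w) ^ n / fact n)) sums (C * \<rho> * exp (\<rho> * norm w))"
    using sums_mult[OF exp_converges[of "\<rho> * norm w"]] by (simp add: divide_inverse_commute)
  show ?thesis
  proof (rule norm_sums_le[OF deriv_series[OF G] s2])
    fix n
    have f: "fact (Suc n) = real (Suc n) * (fact n :: real)" by (simp only: fact_Suc)
    have "norm (of_nat (Suc n) * cf G (Suc n) * w ^ n) = real (Suc n) * norm (cf G (Suc n)) * norm w ^ n"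
      by (simp only: norm_mult norm_power norm_of_nat)
    also have "\<dots> = (norm (cf G (Suc n)) * fact (Suc n)) * norm w ^ n / fact n"
      unfolding f by (simp add: field_simps del: of_nat_Suc)
    also have "\<dots> \<le> (C * \<rho> ^ Suc n) * norm w ^ n / fact n"
      by (intro divide_right_mono mult_right_mono cb) auto
    also have "\<dots> = C * \<rho> * ((\<rho> * norm w) ^ n / fact n)" by (simp add: power_mult_distrib)
    finally show "norm (of_nat (Suc n) * cf G (Suc n) * w ^ n) \<le> C * \<rho> * ((\<rho> * norm w) ^ n / fact n)" .
  qed
qed

lemma gfun_bound:
  assumes G: "G holomorphic_on UNIV" and C0: "C \<ge> 0" and \<rho>: "\<rho> > 0"
    and cb: "\<And>n. norm (cf G n) * fact n \<le> C * \<rho> ^ n"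
  shows "norm (gfun G x s) \<le> C * \<rho> * exp (\<rho> * \<bar>x\<bar>) * exp (\<rho> * \<bar>s\<bar>)"
proof (cases "s = 0")
  case True
  then show ?thesis using deriv_bound[OF G C0 \<rho> cb, of "of_real x"] by (simp add: gfun_def)
next
  case False
  define R where "R = \<bar>x\<bar> + \<bar>s\<bar>"
  have "norm (G (of_real (x + s)) - G (of_real x)) \<le> (C * \<rho> * exp (\<rho> * R)) * norm (of_real (x + s) - (of_real x :: complex))"
  proof (rule field_differentiable_bound[where S = "cball 0 R" and f' = "deriv G"])
    show "convex (cball (0::complex) R)" by simp
    show "(G has_field_derivative deriv G z) (at z within cball 0 R)" for z
      using G by (intro holomorphic_derivI) auto
    show "norm (deriv G z) \<le> C * \<rho> * exp (\<rho> * R)" if "z \<in> cball 0 R" for z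
    proof -
      have "norm (deriv G z) \<le> C * \<rho> * exp (\<rho> * norm z)" by (rule deriv_bound[OF G C0 \<rho> cb])
      also have "\<dots> \<le> C * \<rho> * exp (\<rho> * R)" using that C0 \<rho> by (intro mult_left_mono) auto
      finally show ?thesis .
    qed
    show "of_real (x + s) \<in> cball (0::complex) R"
      using abs_triangle_ineq[of x s] by (simp add: R_def del: of_real_add)
    show "of_real x \<in> cball (0::complex) R" by (simp add: R_def)
  qed
  moreover have "norm (of_real (x + s) - (of_real x :: complex)) = \<bar>s\<bar>"
    by (metis add_diff_cancel_left' norm_of_real of_real_diff)
  ultimately have "norm (G (of_real (x + s)) - G (of_real x)) \<le> C * \<rho> * exp (\<rho> * R) * \<bar>s\<bar>"
    by simp
  moreover have "norm (gfun G x s) = norm (G (of_real (x + s)) - G (of_real x)) / \<bar>s\<bar>"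
    using False by (simp add: gfun_def norm_divide del: of_real_add)
  ultimately have "norm (gfun G x s) \<le> C * \<rho> * exp (\<rho> * R)"
    using False by (simp add: divide_le_eq)
  also have "\<dots> = C * \<rho> * exp (\<rho> * \<bar>x\<bar>) * exp (\<rho> * \<bar>s\<bar>)"
    by (simp add: R_def distrib_left exp_add)
  finally show ?thesis .
qed

lemma gfun_meas:
  assumes G: "G \<in> Emin" and sM: "sets M = sets borel"
  shows "gfun G x \<in> borel_measurable M"
proof -
  have c: "continuous_on UNIV G" using Emin_hol[OF G] holomorphic_on_imp_continuous_on by blast
  have h1: "(\<lambda>s. G (of_real (x + s))) \<in> borel_measurable borel"
    by (intro borel_measurable_continuous_onI continuous_on_compose2[OF c] continuous_intros) auto
  have h2: "(\<lambda>s::real. (G (of_real (x + s)) - G (of_real x)) / of_real s) \<in> borel_measurable borel"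
    using h1 by measurable
  have "{s \<in> space borel. s = (0::real)} \<in> sets borel" by simp
  then have "gfun G x \<in> borel_measurable borel"
    unfolding gfun_def[abs_def] by (intro measurable_If h2) auto
  then show ?thesis using measurable_cong_sets[OF sM refl] by blast
qed

lemma gfun_lim:
  assumes F: "F \<in> Emin"
  shows "(\<lambda>N. gfun (poly (pN F N)) x s) \<longlonglongrightarrow> gfun F x s"
proof (cases "s = 0")
  case False
  have l: "(\<lambda>N. poly (pN F N) w) \<longlonglongrightarrow> F w" for w
    using taylor[OF Emin_hol[OF F], of w] unfolding sums_def poly_pN .
  have ns: "(of_real s :: complex) \<noteq> 0" using False by simp
  show ?thesis using False unfolding gfun_def
    by (simp del: of_real_add) (intro tendsto_intros l ns)
next
  case True
  define b where "b n = of_nat (Suc n) * cf F (Suc n) * (of_real x) ^ n" for n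
  have e: "deriv (poly (pN F N)) (of_real x) = (\<Sum>n\<in>{..<N - 1}. b n)" for N
  proof -
    have h: "(\<lambda>z. poly (pN F N) z) holomorphic_on UNIV" by (intro holomorphic_intros)
    have "(\<lambda>n. of_nat (Suc n) * cf (poly (pN F N)) (Suc n) * (of_real x) ^ n) sums deriv (poly (pN F N)) (of_real x)"
      using deriv_series[OF h] by simp
    moreover have "(\<lambda>n. of_nat (Suc n) * cf (poly (pN F N)) (Suc n) * (of_real x) ^ n)
        = (\<lambda>n. if n \<in> {..<N - 1} then b n else 0)"
      by (auto simp: fun_eq_iff cf_poly coeff_pN b_def)
    ultimately show ?thesis using sums_If_finite_set[of "{..<N - 1}" b] sums_unique2 by fastforce
  qed
  have l: "(\<lambda>M. \<Sum>n<M. b n) \<longlonglongrightarrow> deriv F (of_real x)"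
    using deriv_series[OF Emin_hol[OF F], of "of_real x"] unfolding sums_def b_def .
  have "(\<lambda>N. \<Sum>n\<in>{..<N - 1}. b n) \<longlonglongrightarrow> deriv F (of_real x)"
    by (rule LIMSEQ_imp_Suc) (use l in simp)
  then show ?thesis using True unfolding gfun_def e by simp
qed



theorem mainTheorem1:
  fixes lam eta :: real and M :: "real measure"
    and D :: "(complex \<Rightarrow> complex) \<Rightarrow> (complex \<Rightarrow> complex)"
    and F :: "complex \<Rightarrow> complex" and x :: real
  assumes "eta \<ge> 0"
    and "orth_measure lam eta M"
    and "lowering_ext lam eta D"
    and "F \<in> Emin"
  shows "integrable M (\<lambda>s. if s = 0 then deriv F (of_real x)
            else (F (of_real (x + s)) - F (of_real x)) / of_real s)
    \<and> D F (of_real x) = (\<integral>s. (if s = 0 then deriv F (of_real x)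
            else (F (of_real (x + s)) - F (of_real x)) / of_real s) \<partial>M)"
proof -
  note e0 = assms(1) and orth = assms(2) and low = assms(3) and F = assms(4)
  have gf: "(\<lambda>s. if s = 0 then deriv F (of_real x)
            else (F (of_real (x + s)) - F (of_real x)) / of_real s) = gfun F x"
    by (simp add: gfun_def fun_eq_iff)
  have sM: "sets M = sets borel" using orth unfolding orth_measure_def by blast
  obtain \<rho> where \<rho>: "\<rho> > 0" and ie: "integrable M (\<lambda>s. exp (\<rho> * \<bar>s\<bar>))"
    using exp_integrable[OF orth e0] by blast
  obtain C where C0: "C \<ge> 0" and cb: "\<And>n. norm (cf F n) * fact n \<le> C * \<rho> ^ n"
    using cauchy_coeff[OF F \<rho>] by blast
  define Fs where "Fs N = poly (pN F N)" for N
  have FsE: "Fs N \<in> Emin" for N unfolding Fs_def using Emin_poly[of "pN F N"] by simp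
  have cbN: "norm (cf (Fs N) n) * fact n \<le> C * \<rho> ^ n" for N n
  proof -
    have "norm (cf (Fs N) n) \<le> norm (cf F n)" by (simp add: Fs_def cf_poly coeff_pN)
    then have "norm (cf (Fs N) n) * fact n \<le> norm (cf F n) * fact n" by (intro mult_right_mono) auto
    then show ?thesis using cb[of n] by linarith
  qed
  define w where "w s = C * \<rho> * exp (\<rho> * \<bar>x\<bar>) * exp (\<rho> * \<bar>s\<bar>)" for s
  have iw: "integrable M w" unfolding w_def using ie by (intro Bochner_Integration.integrable_mult_right)
  have meas: "gfun F x \<in> borel_measurable M" by (rule gfun_meas[OF F sM])
  have measN: "\<And>N. gfun (Fs N) x \<in> borel_measurable M" by (rule gfun_meas[OF FsE sM])
  have lim: "AE s in M. (\<lambda>N. gfun (Fs N) x s) \<longlonglongrightarrow> gfun F x s"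
    unfolding Fs_def using gfun_lim[OF F] by simp
  have bnd: "\<And>N. AE s in M. norm (gfun (Fs N) x s) \<le> w s"
    unfolding w_def using gfun_bound[OF Emin_hol[OF FsE] C0 \<rho> cbN] by simp
  have intF: "integrable M (gfun F x)"
    by (rule integrable_dominated_convergence[OF meas measN iw lim bnd])
  have L1: "(\<lambda>N. \<integral>s. gfun (Fs N) x s \<partial>M) \<longlonglongrightarrow> (\<integral>s. gfun F x s \<partial>M)"
    by (rule integral_dominated_convergence[OF meas measN iw lim bnd])
  have eqN: "D (Fs N) (of_real x) = (\<integral>s. gfun (Fs N) x s \<partial>M)" for N
    using Cl_poly[OF orth low, of x "pN F N"] unfolding Cl_def Fs_def by simp
  have DFE: "D G \<in> Emin" if "G \<in> Emin" for G using low that unfolding lowering_ext_def by blast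
  have cont: "\<forall>q. (\<lambda>k. Nnorm q (\<lambda>z. D (Fs k) z - D F z)) \<longlonglongrightarrow> 0"
  proof -
    have "\<forall>q. (\<lambda>k. Nnorm q (\<lambda>z. Fs k z - F z)) \<longlonglongrightarrow> 0"
      unfolding Fs_def using Nnorm_tail[OF F] by simp
    then show ?thesis using low FsE F unfolding lowering_ext_def by blast
  qed
  have L2: "(\<lambda>N. D (Fs N) (of_real x)) \<longlonglongrightarrow> D F (of_real x)"
  proof (rule LIM_zero_cancel, rule Lim_null_comparison)
    show "\<forall>\<^sub>F N in sequentially. norm (D (Fs N) (of_real x) - D F (of_real x))
        \<le> sqrt (Nnorm 0 (\<lambda>z. D (Fs N) z - D F z)) * exp (norm (of_real x :: complex))"
    proof (intro always_eventually allI)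
      fix N
      show "norm (D (Fs N) (of_real x) - D F (of_real x))
        \<le> sqrt (Nnorm 0 (\<lambda>z. D (Fs N) z - D F z)) * exp (norm (of_real x :: complex))"
        using Emin_pt[OF Emin_diff[OF DFE[OF FsE] DFE[OF F]], where z = "of_real x"] by simp
    qed
    have "(\<lambda>N. Nnorm 0 (\<lambda>z. D (Fs N) z - D F z)) \<longlonglongrightarrow> 0" using cont by blast
    then have "(\<lambda>N. sqrt (Nnorm 0 (\<lambda>z. D (Fs N) z - D F z))) \<longlonglongrightarrow> sqrt 0"
      by (intro tendsto_intros)
    then show "(\<lambda>N. sqrt (Nnorm 0 (\<lambda>z. D (Fs N) z - D F z)) * exp (norm (of_real x :: complex))) \<longlonglongrightarrow> 0"
      using tendsto_mult_right_zero by fastforce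
  qed
  have "D F (of_real x) = (\<integral>s. gfun F x s \<partial>M)"
    using LIMSEQ_unique[OF L2] L1 eqN by simp
  then show ?thesis unfolding gf using intF by simp
qed


end
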